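(* Let $\mathfrak{sl}_2$ have basis $H,X,Y$ with $[H,X]=2X$, $[H,Y]=-2Y$, $[X,Y]=H$. For $k\in\mathbb{C}$ let $V_k$ be the Verma module with highest weight vector $v_k$ ($Xv_k=0$, $Hv_k=kv_k$, basis $Y^lv_k$, $l\ge0$). Let $N\ge1$, $k_1,\dots,k_N\in\mathbb{C}$, $b\ne0$, $\Lambda\in\mathbb{C}$, $m\ge 1$, and $v=v_{k_1}\otimes\cdots\otimes v_{k_N}\in V_{k_1}\otimes\cdots\otimes V_{k_N}$. For an operator $g\in\mathfrak{sl}_2$ let $g_a$ denote $g$ acting on the $a$-th tensor factor, and set $\Omega_{ab}=\tfrac12H_aH_b+X_aY_b+Y_aX_b$. Define $$\phi_0(z)=\exp\Big(-\frac{\Lambda}{2b^2}\sum_{a=1}^Nk_az_a\Big)\prod_{a<b}(z_a-z_b)^{-\frac{k_ak_b}{2b^2}},\qquad F(z,w)=e^{\frac{\Lambda w}{b^2}}\prod_{a=1}^N(w-z_a)^{\frac{k_a}{b^2}}\sum_{a=1}^N\frac{Y_a}{w-z_a},$$ $$\rho(w_1,\dots,w_m)=\prod_{1\le p<q\le m}(w_p-w_q)^{-\frac{2}{b^2}},\qquad \Psi(z)=\phi_0(z)\int_\Gamma\rho(\mathbf w)F(z,w_1)F(z,w_2)\cdots F(z,w_m)\,v\;d^m\mathbf w,$$ for an admissible cycle $\Gamma$. Then for every $i=1,\dots,N$, $$-b^2\frac{\partial\Psi}{\partial z_i}=\Big(\frac{\Lambda}{2}H_i+\sum_{j\ne i}\frac{\Omega_{ij}}{z_i-z_j}\Big)\Psi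 .$$ Equivalently, writing $\Psi=\phi_0\sum_{\mathbf m}\phi^{(\mathbf m)}\,Y_1^{m_1}\cdots Y_N^{m_N}v$ (sum over $\mathbf m=(m_1,\dots,m_N)\in\mathbb{Z}_{\ge0}^N$ with $\sum m_a=m$), the coefficients satisfy $-b^2\partial_i\phi^{(\mathbf m)}=-\Lambda m_i\phi^{(\mathbf m)}+(\text{terms coming from }\sum_{j\neq i}\Omega_{ij}/(z_i-z_j))$, where $H_iY_1^{m_1}\cdots Y_N^{m_N}v=(k_i-2m_i)Y_1^{m_1}\cdots Y_N^{m_N}v$.
   Context: The $Y_a$ commute with each other, so the product of the $F$'s is well defined; $\Psi$ takes values in the finite-dimensional subspace of $V_{k_1}\otimes\cdots\otimes V_{k_N}$ spanned by $Y_1^{m_1}\cdots Y_N^{m_N}v$ with $\sum m_a=m$ (the "height $m$" subspace). The integrand is multivalued; a branch is fixed along $\Gamma$. "Admissible cycle" means: $\Gamma$ is a (possibly non-compact) $m$-dimensional cycle in $\mathbf w=(w_1,\dots,w_m)$-space, locally constant in $z$, such that all integrals converge, $z$-derivatives may be taken under the integral, and integrals over $\Gamma$ of $\partial/\partial w_p$ of $\rho\prod_q e^{\Lambda w_q/b^2}\prod_{q,a}(w_q-z_a)^{k_a/b^2}$ times any rational function with poles only at $w_q=z_a$ vanish. The equation is the degree-one irregular KZ equation at level $\kappa=-b^2$. *)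

theory Defs
  imports "HOL-Analysis.Analysis"
begin

text \<open>Tensor factors are indexed by a < N (0-based), integration
variables by p < m (0-based). A vector of the height-graded part of
V_{k_1} (x) ... (x) V_{k_N} is represented by its coefficient function
c :: (nat => nat) => complex, standing for sum_n c n * Y_1^{n_1} ... Y_N^{n_N} v.\<close>

type_synonym vec = "(nat \<Rightarrow> nat) \<Rightarrow> complex"

text \<open>Action of sl2 on the a-th Verma factor, written out on the basis
Y^l v_k:  Y e_l = e_{l+1},  H e_l = (k - 2l) e_l,  X e_l = l (k - l + 1) e_{l-1}.\<close>

definition Yop :: "nat \<Rightarrow> vec \<Rightarrow> vec" where
  "Yop a c = (\<lambda>n. if n a = 0 then 0 else c (n(a := n a - 1)))"

definition Hop :: "(nat \<Rightarrow> complex) \<Rightarrow> nat \<Rightarrow> vec \<Rightarrow> vec" where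
  "Hop k a c = (\<lambda>n. (k a - 2 * of_nat (n a)) * c n)"

definition Xop :: "(nat \<Rightarrow> complex) \<Rightarrow> nat \<Rightarrow> vec \<Rightarrow> vec" where
  "Xop k a c = (\<lambda>n. of_nat (n a + 1) * (k a - of_nat (n a)) * c (n(a := n a + 1)))"

definition Omega :: "(nat \<Rightarrow> complex) \<Rightarrow> nat \<Rightarrow> nat \<Rightarrow> vec \<Rightarrow> vec" where
  "Omega k a b c = (\<lambda>n. (1/2) * Hop k a (Hop k b c) n + Xop k a (Yop b c) n + Yop a (Xop k b c) n)"

definition hw_vec :: vec where
  "hw_vec = (\<lambda>n. if n = (\<lambda>_. 0) then 1 else 0)"

text \<open>The operator sum_a Y_a / (x - z_a) and the product
F(z,w_0) ... F(z,w_{m-1}) v with all scalar factors removed (they are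
collected, together with rho, into the fixed branch Phi).\<close>
definition Fsum :: "nat \<Rightarrow> (nat \<Rightarrow> complex) \<Rightarrow> complex \<Rightarrow> vec \<Rightarrow> vec" where
  "Fsum N z x c = (\<lambda>n. \<Sum>a<N. Yop a c n / (x - z a))"

definition Fprod :: "nat \<Rightarrow> nat \<Rightarrow> (nat \<Rightarrow> complex) \<Rightarrow> (nat \<Rightarrow> complex) \<Rightarrow> vec" where
  "Fprod N m z w = foldr (\<lambda>p c. Fsum N z (w p) c) [0..<m] hw_vec"

definition pd :: "nat \<Rightarrow> ((nat \<Rightarrow> complex) \<Rightarrow> complex) \<Rightarrow> (nat \<Rightarrow> complex) \<Rightarrow> complex" where
  "pd i f x = deriv (\<lambda>t. f (x(i := t))) (x i)"

inductive_set ratfun :: "nat \<Rightarrow> nat \<Rightarrow> (nat \<Rightarrow> complex) \<Rightarrow> ((nat \<Rightarrow> complex) \<Rightarrow> complex) set"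
  for N m :: nat and z :: "nat \<Rightarrow> complex" where
  const: "(\<lambda>w. c) \<in> ratfun N m z"
| coord: "q < m \<Longrightarrow> (\<lambda>w. w q) \<in> ratfun N m z"
| pole: "q < m \<Longrightarrow> a < N \<Longrightarrow> (\<lambda>w. 1 / (w q - z a)) \<in> ratfun N m z"
| add: "f \<in> ratfun N m z \<Longrightarrow> g \<in> ratfun N m z \<Longrightarrow> (\<lambda>w. f w + g w) \<in> ratfun N m z"
| mult: "f \<in> ratfun N m z \<Longrightarrow> g \<in> ratfun N m z \<Longrightarrow> (\<lambda>w. f w * g w) \<in> ratfun N m z"

text \<open>Same, with coefficients allowed to be polynomial in z (for
differentiation in z under the integral).\<close>
inductive_set ratfunz :: "nat \<Rightarrow> nat \<Rightarrow> ((nat \<Rightarrow> complex) \<Rightarrow> (nat \<Rightarrow> complex) \<Rightarrow> complex) set"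
  for N m :: nat where
  const: "(\<lambda>z w. c) \<in> ratfunz N m"
| wcoord: "q < m \<Longrightarrow> (\<lambda>z w. w q) \<in> ratfunz N m"
| zcoord: "a < N \<Longrightarrow> (\<lambda>z w. z a) \<in> ratfunz N m"
| pole: "q < m \<Longrightarrow> a < N \<Longrightarrow> (\<lambda>z w. 1 / (w q - z a)) \<in> ratfunz N m"
| add: "f \<in> ratfunz N m \<Longrightarrow> g \<in> ratfunz N m \<Longrightarrow> (\<lambda>z w. f z w + g z w) \<in> ratfunz N m"
| mult: "f \<in> ratfunz N m \<Longrightarrow> g \<in> ratfunz N m \<Longrightarrow> (\<lambda>z w. f z w * g z w) \<in> ratfunz N m"

text \<open>phi0 is a branch of
exp(-Lam/(2b^2) sum_a k_a z_a) prod_{a<c} (z_a - z_c)^(-k_a k_c/(2 b^2)) on Zs,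
characterised by its logarithmic partial derivatives.\<close>
definition phi0_branch ::
  "nat \<Rightarrow> (nat \<Rightarrow> complex) \<Rightarrow> complex \<Rightarrow> complex \<Rightarrow> (nat \<Rightarrow> complex) set \<Rightarrow> ((nat \<Rightarrow> complex) \<Rightarrow> complex) \<Rightarrow> bool" where
  "phi0_branch N k b Lam Zs phi0 \<longleftrightarrow>
     (\<forall>z\<in>Zs. \<forall>i<N.
        ((\<lambda>t. phi0 (z(i := t))) has_field_derivative
           phi0 z * (- Lam * k i / (2 * b^2) - (\<Sum>j\<in>{..<N} - {i}. k i * k j / (2 * b^2 * (z i - z j)))))
        (at (z i)))"

text \<open>Phi z w is the branch, fixed along the cycle (support G), of
rho(w) prod_p [ exp(Lam w_p / b^2) prod_a (w_p - z_a)^(k_a/b^2) ],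
characterised by its logarithmic partial derivatives in all variables.\<close>
definition master_branch ::
  "nat \<Rightarrow> nat \<Rightarrow> (nat \<Rightarrow> complex) \<Rightarrow> complex \<Rightarrow> complex \<Rightarrow> (nat \<Rightarrow> complex) set \<Rightarrow> (nat \<Rightarrow> complex) set
   \<Rightarrow> ((nat \<Rightarrow> complex) \<Rightarrow> (nat \<Rightarrow> complex) \<Rightarrow> complex) \<Rightarrow> bool" where
  "master_branch N m k b Lam Zs G Phi \<longleftrightarrow>
     (\<forall>z\<in>Zs. \<forall>w\<in>G.
        (\<forall>p<m. \<forall>a<N. w p \<noteq> z a) \<and>
        (\<forall>p<m. \<forall>q<m. p \<noteq> q \<longrightarrow> w p \<noteq> w q) \<and>
        (\<forall>p<m. ((\<lambda>t. Phi z (w(p := t))) has_field_derivative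
            Phi z w * (Lam / b^2 + (\<Sum>a<N. k a / (b^2 * (w p - z a)))
                        - (\<Sum>q\<in>{..<m} - {p}. 2 / (b^2 * (w p - w q))))) (at (w p))) \<and>
        (\<forall>a<N. ((\<lambda>t. Phi (z(a := t)) w) has_field_derivative
            Phi z w * (- (\<Sum>p<m. k a / (b^2 * (w p - z a))))) (at (z a))))"

text \<open>An admissible cycle with support G, valid for all z in Zs, given through
its integration functional intg (intg f = integral over the cycle of f(w) d^m w).\<close>
definition admissible_cycle ::
  "nat \<Rightarrow> nat \<Rightarrow> (nat \<Rightarrow> complex) set \<Rightarrow> (nat \<Rightarrow> complex) set
   \<Rightarrow> ((nat \<Rightarrow> complex) \<Rightarrow> (nat \<Rightarrow> complex) \<Rightarrow> complex) \<Rightarrow> (((nat \<Rightarrow> complex) \<Rightarrow> complex) \<Rightarrow> complex) \<Rightarrow> bool" where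
  "admissible_cycle N m Zs G Phi intg \<longleftrightarrow>
     (\<forall>f g. intg (\<lambda>w. f w + g w) = intg f + intg g) \<and>
     (\<forall>c f. intg (\<lambda>w. c * f w) = c * intg f) \<and>
     (\<forall>f g. (\<forall>w\<in>G. f w = g w) \<longrightarrow> intg f = intg g) \<and>
     (\<forall>R\<in>ratfunz N m. \<forall>z\<in>Zs. \<forall>i<N.
        ((\<lambda>t. intg (\<lambda>w. Phi (z(i := t)) w * R (z(i := t)) w)) has_field_derivative
           intg (\<lambda>w. pd i (\<lambda>z'. Phi z' w * R z' w) z)) (at (z i))) \<and>
     (\<forall>z\<in>Zs. \<forall>R\<in>ratfun N m z. \<forall>p<m.
        intg (\<lambda>w. pd p (\<lambda>w'. Phi z w' * R w') w) = 0)"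

definition Psi ::
  "nat \<Rightarrow> nat \<Rightarrow> ((nat \<Rightarrow> complex) \<Rightarrow> complex) \<Rightarrow> ((nat \<Rightarrow> complex) \<Rightarrow> (nat \<Rightarrow> complex) \<Rightarrow> complex)
   \<Rightarrow> (((nat \<Rightarrow> complex) \<Rightarrow> complex) \<Rightarrow> complex) \<Rightarrow> (nat \<Rightarrow> complex) \<Rightarrow> vec" where
  "Psi N m phi0 Phi intg z = (\<lambda>n. phi0 z * intg (\<lambda>w. Phi z w * Fprod N m z w n))"

end

theory Submission
  imports Defs
begin


lemma Yop_Yop: "Yop a (Yop b c) = Yop b (Yop a c)"
  by (auto simp: Yop_def fun_upd_twist intro!: ext)

lemma Hop_Yop: "Hop k a (Yop b c) n = Yop b (Hop k a c) n - (if a = b then 2 * Yop a c n else 0)"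
  by (auto simp: Yop_def Hop_def of_nat_diff algebra_simps)

lemma Xop_Yop: "Xop k a (Yop b c) n = Yop b (Xop k a c) n + (if a = b then Hop k a c n else 0)"
  by (cases "n b = 0") (auto simp: Yop_def Hop_def Xop_def of_nat_diff algebra_simps fun_upd_twist fun_upd_idem)

lemma Omega_Yop: assumes "i \<noteq> j"
  shows "Omega k i j (Yop a c) n = Yop a (Omega k i j c) n +
     (if a = i then Hop k i (Yop j c) n - Yop i (Hop k j c) n
      else if a = j then Yop i (Hop k j c) n - Hop k i (Yop j c) n else 0)"
  using assms
  by (cases "n a = 0"; cases "n i = 0"; cases "n j = 0")
   (auto simp: Omega_def Yop_def Hop_def Xop_def of_nat_diff algebra_simps fun_upd_twist fun_upd_idem)




lemma Yop_add[simp]: "Yop a (\<lambda>n. f n + g n) n = Yop a f n + Yop a g n" by (simp add: Yop_def)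
lemma Yop_diff[simp]: "Yop a (\<lambda>n. f n - g n) n = Yop a f n - Yop a g n" by (simp add: Yop_def)
lemma Yop_scale[simp]: "Yop a (\<lambda>n. c * f n) n = c * Yop a f n" by (simp add: Yop_def)
lemma Yop_div[simp]: "Yop a (\<lambda>n. f n / d) n = Yop a f n / d" by (simp add: Yop_def)
lemma Yop_zero[simp]: "Yop a (\<lambda>n. 0) n = 0" by (simp add: Yop_def)
lemma Yop_sum[simp]: "Yop a (\<lambda>n. \<Sum>x\<in>A. f x n) n = (\<Sum>x\<in>A. Yop a (f x) n)" by (simp add: Yop_def)

lemma Hop_add[simp]: "Hop k a (\<lambda>n. f n + g n) n = Hop k a f n + Hop k a g n" by (simp add: Hop_def algebra_simps)
lemma Hop_diff[simp]: "Hop k a (\<lambda>n. f n - g n) n = Hop k a f n - Hop k a g n" by (simp add: Hop_def algebra_simps)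
lemma Hop_scale[simp]: "Hop k a (\<lambda>n. c * f n) n = c * Hop k a f n" by (simp add: Hop_def algebra_simps)
lemma Hop_div[simp]: "Hop k a (\<lambda>n. f n / d) n = Hop k a f n / d" by (simp add: Hop_def)
lemma Hop_zero[simp]: "Hop k a (\<lambda>n. 0) n = 0" by (simp add: Hop_def)
lemma Hop_sum[simp]: "Hop k a (\<lambda>n. \<Sum>x\<in>A. f x n) n = (\<Sum>x\<in>A. Hop k a (f x) n)" by (simp add: Hop_def sum_distrib_left)

lemma Xop_add[simp]: "Xop k a (\<lambda>n. f n + g n) n = Xop k a f n + Xop k a g n" by (simp add: Xop_def algebra_simps)
lemma Xop_diff[simp]: "Xop k a (\<lambda>n. f n - g n) n = Xop k a f n - Xop k a g n" by (simp add: Xop_def algebra_simps)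
lemma Xop_scale[simp]: "Xop k a (\<lambda>n. c * f n) n = c * Xop k a f n" by (simp add: Xop_def algebra_simps)
lemma Xop_div[simp]: "Xop k a (\<lambda>n. f n / d) n = Xop k a f n / d" by (simp add: Xop_def)
lemma Xop_zero[simp]: "Xop k a (\<lambda>n. 0) n = 0" by (simp add: Xop_def)
lemma Xop_sum[simp]: "Xop k a (\<lambda>n. \<Sum>x\<in>A. f x n) n = (\<Sum>x\<in>A. Xop k a (f x) n)" by (simp add: Xop_def sum_distrib_left)

lemma Hop_fun: "Hop k a (\<lambda>n. f n) = (\<lambda>n. Hop k a f n)" by simp

lemma Omega_add[simp]: "Omega k i j (\<lambda>n. f n + g n) n = Omega k i j f n + Omega k i j g n"
proof -
  have 1: "Hop k j (\<lambda>n. f n + g n) = (\<lambda>n. Hop k j f n + Hop k j g n)" by (rule ext) simp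
  have 2: "Yop j (\<lambda>n. f n + g n) = (\<lambda>n. Yop j f n + Yop j g n)" by (rule ext) simp
  have 3: "Xop k j (\<lambda>n. f n + g n) = (\<lambda>n. Xop k j f n + Xop k j g n)" by (rule ext) simp
  show ?thesis by (simp add: Omega_def 1 2 3 algebra_simps)
qed
lemma Omega_scale[simp]: "Omega k i j (\<lambda>n. c * f n) n = c * Omega k i j f n"
proof -
  have 1: "Hop k j (\<lambda>n. c * f n) = (\<lambda>n. c * Hop k j f n)" by (rule ext) simp
  have 2: "Yop j (\<lambda>n. c * f n) = (\<lambda>n. c * Yop j f n)" by (rule ext) simp
  have 3: "Xop k j (\<lambda>n. c * f n) = (\<lambda>n. c * Xop k j f n)" by (rule ext) simp
  show ?thesis by (simp add: Omega_def 1 2 3 algebra_simps)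
qed
lemma Omega_div[simp]: "Omega k i j (\<lambda>n. f n / d) n = Omega k i j f n / d"
  using Omega_scale[of k i j "1/d" f n] by simp
lemma Omega_zero[simp]: "Omega k i j (\<lambda>n. 0) n = 0"
  using Omega_scale[of k i j 0 "\<lambda>_. 0" n] by simp
lemma Omega_sum[simp]: "Omega k i j (\<lambda>n. \<Sum>x\<in>A. f x n) n = (\<Sum>x\<in>A. Omega k i j (f x) n)"
proof (induction A rule: infinite_finite_induct)
  case (insert x F)
  then show ?case by simp
qed simp_all

lemma Fsum_add[simp]: "Fsum N z x (\<lambda>n. f n + g n) n = Fsum N z x f n + Fsum N z x g n"
  by (simp add: Fsum_def add_divide_distrib sum.distrib)
lemma Fsum_diff[simp]: "Fsum N z x (\<lambda>n. f n - g n) n = Fsum N z x f n - Fsum N z x g n"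
  by (simp add: Fsum_def diff_divide_distrib sum_subtractf)
lemma Fsum_scale[simp]: "Fsum N z x (\<lambda>n. c * f n) n = c * Fsum N z x f n"
  by (simp add: Fsum_def sum_distrib_left)
lemma Fsum_div[simp]: "Fsum N z x (\<lambda>n. f n / d) n = Fsum N z x f n / d"
  by (simp add: Fsum_def sum_divide_distrib mult.commute)
lemma Fsum_zero[simp]: "Fsum N z x (\<lambda>n. 0) n = 0"
  by (simp add: Fsum_def)
lemma Fsum_sum[simp]: "Fsum N z x (\<lambda>n. \<Sum>y\<in>A. f y n) n = (\<Sum>y\<in>A. Fsum N z x (f y) n)"
  by (simp add: Fsum_def sum_divide_distrib sum.swap[of _ A])

lemma Fsum_Yop: "Fsum N z x (Yop a c) = Yop a (Fsum N z x c)"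
proof (rule ext)
  fix n
  have "Yop a (Fsum N z x c) n = Yop a (\<lambda>n. \<Sum>b<N. Yop b c n / (x - z b)) n"
    by (simp add: Fsum_def)
  also have "\<dots> = (\<Sum>b<N. Yop a (Yop b c) n / (x - z b))" by simp
  finally show "Fsum N z x (Yop a c) n = Yop a (Fsum N z x c) n"
    by (simp add: Fsum_def Yop_Yop)
qed

lemma Fsum_Fsum: "Fsum N z x (Fsum N z y c) = Fsum N z y (Fsum N z x c)"
proof (rule ext)
  fix n
  have "Fsum N z x (Fsum N z y c) n = (\<Sum>a<N. \<Sum>b<N. Yop a (Yop b c) n / (y - z b) / (x - z a))"
    by (simp add: Fsum_def[of N z x] Fsum_def[of N z y] sum_divide_distrib)
  also have "\<dots> = (\<Sum>b<N. \<Sum>a<N. Yop b (Yop a c) n / (x - z a) / (y - z b))"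
    by (subst sum.swap) (simp add: Yop_Yop divide_simps mult.commute)
  also have "\<dots> = Fsum N z y (Fsum N z x c) n"
    by (simp add: Fsum_def[of N z x] Fsum_def[of N z y] sum_divide_distrib)
  finally show "Fsum N z x (Fsum N z y c) n = Fsum N z y (Fsum N z x c) n" .
qed

definition UU :: "nat \<Rightarrow> (nat \<Rightarrow> complex) \<Rightarrow> (nat \<Rightarrow> complex) \<Rightarrow> nat set \<Rightarrow> vec" where
  "UU N z w S = Finite_Set.fold (\<lambda>p c. Fsum N z (w p) c) hw_vec S"

interpretation UUc: comp_fun_commute "\<lambda>p c. Fsum N z (w p) c"
  by unfold_locales (auto simp: Fsum_Fsum)

lemma UU_empty[simp]: "UU N z w {} = hw_vec" by (simp add: UU_def)
lemma UU_insert: "finite S \<Longrightarrow> p \<notin> S \<Longrightarrow> UU N z w (insert p S) = Fsum N z (w p) (UU N z w S)"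
  by (simp add: UU_def)
lemma UU_remove: "finite S \<Longrightarrow> p \<in> S \<Longrightarrow> UU N z w S = Fsum N z (w p) (UU N z w (S - {p}))"
  by (metis UU_insert finite_Diff insert_Diff Diff_iff insertI1)

lemma Fprod_UU: "Fprod N m z w = UU N z w {..<m}"
proof -
  have "distinct xs \<Longrightarrow> foldr (\<lambda>p c. Fsum N z (w p) c) xs hw_vec = UU N z w (set xs)" for xs
    by (induction xs) (simp_all add: UU_insert)
  from this[of "[0..<m]"] show ?thesis by (simp add: Fprod_def atLeast0LessThan)
qed

lemma UU_cong: "finite S \<Longrightarrow> (\<And>q. q \<in> S \<Longrightarrow> w q = w' q) \<Longrightarrow> UU N z w S = UU N z w' S"
  by (induction S rule: finite_induct) (simp_all add: UU_insert)




lemma Hop_Fsum: "Hop k a (Fsum N z x c) n = Fsum N z x (Hop k a c) n - (if a < N then 2 * Yop a c n / (x - z a) else 0)"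
proof -
  have "Hop k a (Fsum N z x c) n = (\<Sum>b<N. Hop k a (Yop b c) n / (x - z b))"
    by (simp add: Fsum_def)
  also have "\<dots> = (\<Sum>b<N. Yop b (Hop k a c) n / (x - z b) - (if b = a then 2 * Yop a c n / (x - z a) else 0))"
    by (rule sum.cong) (auto simp: Hop_Yop diff_divide_distrib)
  also have "\<dots> = (\<Sum>b<N. Yop b (Hop k a c) n / (x - z b)) - (\<Sum>b<N. (if b = a then 2 * Yop a c n / (x - z a) else 0))"
    by (simp add: sum_subtractf)
  also have "\<dots> = Fsum N z x (Hop k a c) n - (if a < N then 2 * Yop a c n / (x - z a) else 0)"
    by (simp add: Fsum_def)
  finally show ?thesis .
qed

lemma Omega_Fsum:
  assumes "i \<noteq> j" "i < N" "j < N"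
  shows "Omega k i j (Fsum N z x c) n = Fsum N z x (Omega k i j c) n
     + (1 / (x - z i) - 1 / (x - z j)) * (Hop k i (Yop j c) n - Yop i (Hop k j c) n)"
proof -
  define E where "E = Hop k i (Yop j c) n - Yop i (Hop k j c) n"
  have "Omega k i j (Fsum N z x c) n = (\<Sum>b<N. Omega k i j (Yop b c) n / (x - z b))"
    by (simp add: Fsum_def)
  also have "\<dots> = (\<Sum>b<N. Yop b (Omega k i j c) n / (x - z b)
      + ((if b = i then E / (x - z i) else 0) + (if b = j then - E / (x - z j) else 0)))"
    by (rule sum.cong) (use assms in \<open>auto simp: Omega_Yop E_def add_divide_distrib\<close>)
  also have "\<dots> = (\<Sum>b<N. Yop b (Omega k i j c) n / (x - z b))
      + ((\<Sum>b<N. if b = i then E / (x - z i) else 0) + (\<Sum>b<N. if b = j then - E / (x - z j) else 0))"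
    by (simp add: sum.distrib)
  also have "\<dots> = Fsum N z x (Omega k i j c) n + (1 / (x - z i) - 1 / (x - z j)) * E"
    using assms by (simp add: Fsum_def algebra_simps)
  finally show ?thesis by (simp add: E_def)
qed

lemma Xop_hw[simp]: "Xop k a hw_vec n = 0"
proof -
  have "n(a := Suc (n a)) \<noteq> (\<lambda>_. 0)" by (metis fun_upd_same nat.distinct(1))
  then show ?thesis by (simp add: Xop_def hw_vec_def)
qed
lemma Hop_hw: "Hop k a hw_vec n = k a * hw_vec n"
  by (cases "n = (\<lambda>_. 0)") (auto simp: Hop_def hw_vec_def)

lemma UU_L1:
  assumes "finite S" "a < N"
  shows "Hop k a (UU N z w S) = (\<lambda>n. k a * UU N z w S n - 2 * (\<Sum>p\<in>S. Yop a (UU N z w (S - {p})) n / (w p - z a)))"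
  using assms(1)
proof (induction S rule: finite_induct)
  case empty
  then show ?case by (simp add: Hop_hw fun_eq_iff)
next
  case (insert p S)
  let ?F = "Fsum N z (w p)"
  have P': "UU N z w (insert p S - {q}) = ?F (UU N z w (S - {q}))" if "q \<in> S" for q
  proof -
    have "insert p S - {q} = insert p (S - {q})" using insert that by auto
    then show ?thesis using insert by (simp add: UU_insert)
  qed
  show ?case
  proof (rule ext)
    fix n
    have "Hop k a (UU N z w (insert p S)) n = ?F (Hop k a (UU N z w S)) n - 2 * Yop a (UU N z w S) n / (w p - z a)"
      using insert assms by (simp add: UU_insert Hop_Fsum)
    also have "\<dots> = k a * ?F (UU N z w S) n - 2 * (\<Sum>q\<in>S. Yop a (?F (UU N z w (S - {q}))) n / (w q - z a))
        - 2 * Yop a (UU N z w S) n / (w p - z a)"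
      by (simp add: insert.IH Fsum_Yop)
    also have "\<dots> = k a * UU N z w (insert p S) n - 2 * (\<Sum>q\<in>insert p S. Yop a (UU N z w (insert p S - {q})) n / (w q - z a))"
      using insert by (simp add: UU_insert P' algebra_simps cong: sum.cong)
    finally show "Hop k a (UU N z w (insert p S)) n = k a * UU N z w (insert p S) n - 2 * (\<Sum>q\<in>insert p S. Yop a (UU N z w (insert p S - {q})) n / (w q - z a))" .
  qed
qed




lemma sc1: "x \<noteq> zi \<Longrightarrow> x \<noteq> zj \<Longrightarrow> zi \<noteq> zj \<Longrightarrow>
   (1 / (x - zi) - 1 / (x - zj)) / (zi - zj) = 1 / ((x - zi) * (x - zj))"
  for x zi zj :: complex by (simp add: divide_simps)
lemma sc2: "y \<noteq> zi \<Longrightarrow> y \<noteq> zj \<Longrightarrow>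
   1 / (y - zi) - 1 / (y - zj) = (zi - zj) / ((y - zi) * (y - zj))"
  for y zi zj :: complex by (simp add: divide_simps)
lemma sc3: "x \<noteq> y \<Longrightarrow> x \<noteq> zi \<Longrightarrow> x \<noteq> za \<Longrightarrow> y \<noteq> zi \<Longrightarrow> y \<noteq> za \<Longrightarrow>
   2 / (x - y) * (1 / (x - zi)) * (1 / (y - za)) + 2 / (y - x) * (1 / (y - zi)) * (1 / (x - za))
   = 2 * (za - zi) / ((x - zi) * (x - za) * (y - zi) * (y - za))"
  for x y zi za :: complex by (simp add: divide_simps) (simp add: algebra_simps)

lemma lin_div: "(X + a * e - K) / d = (X - K) / d + (a / d) * e" for X a e K d :: complex
  by (simp add: diff_divide_distrib add_divide_distrib)

lemma sc0: "2 / (x - y) * u * v + 2 / (y - x) * v * u = 0" for x y u v :: complex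
proof -
  have "2 / (y - x) = - (2 / (x - y))" by (metis minus_diff_eq divide_minus_right)
  then show ?thesis by simp
qed
lemma sc5: "- (1 / A * (1 / B) * (2 * (Y * ((zi - zj) / (Cq * Dq))))) = Y * (2 * (zj - zi) / (A * B * Cq * Dq))"
  for A B Y zi zj Cq Dq :: complex
  by (simp add: field_simps minus_divide_left)

lemma cd: "c * (x - y) = c * x + - (c * y)" for c x y :: complex by (simp add: algebra_simps)

lemma lin2: "c1 * (y / A) + c2 * (y / B) = y * (c1 * (1 / A) + c2 * (1 / B))" for c1 c2 y A B :: complex
  by (simp add: field_simps)

lemma Hop_hw_fun: "Hop k a hw_vec = (\<lambda>n. k a * hw_vec n)" by (simp add: Hop_hw fun_eq_iff)
lemma Xop_hw_fun: "Xop k a hw_vec = (\<lambda>n. 0)" by (simp add: fun_eq_iff)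
lemma Omega_hw: "i \<noteq> j \<Longrightarrow> Omega k i j hw_vec n = k i * k j / 2 * hw_vec n"
  by (simp add: Omega_def Xop_Yop Hop_hw_fun Xop_hw_fun)

definition KL :: "nat \<Rightarrow> (nat \<Rightarrow> complex) \<Rightarrow> (nat \<Rightarrow> complex) \<Rightarrow> (nat \<Rightarrow> complex) \<Rightarrow> nat \<Rightarrow> nat set \<Rightarrow> vec" where
  "KL N k z w i S = (\<lambda>n. \<Sum>j\<in>{..<N} - {i}. (Omega k i j (UU N z w S) n - k i * k j / 2 * UU N z w S n) / (z i - z j))"

definition KR :: "nat \<Rightarrow> (nat \<Rightarrow> complex) \<Rightarrow> (nat \<Rightarrow> complex) \<Rightarrow> (nat \<Rightarrow> complex) \<Rightarrow> nat \<Rightarrow> nat set \<Rightarrow> vec" where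
  "KR N k z w i S = (\<lambda>n. (\<Sum>p\<in>S. \<Sum>j\<in>{..<N} - {i}. (k i * Yop j (UU N z w (S - {p})) n - k j * Yop i (UU N z w (S - {p})) n) / ((w p - z i) * (w p - z j)))
      + (\<Sum>p\<in>S. (\<Sum>q\<in>S - {p}. 2 / (w p - w q)) * Yop i (UU N z w (S - {p})) n / (w p - z i)))"

lemma KEYO:
  assumes "finite S" "i < N" "\<forall>j<N. j \<noteq> i \<longrightarrow> z j \<noteq> z i"
    "\<forall>p\<in>S. \<forall>a<N. w p \<noteq> z a" "\<forall>p\<in>S. \<forall>q\<in>S. p \<noteq> q \<longrightarrow> w p \<noteq> w q"
  shows "KL N k z w i S = KR N k z w i S"
  using assms(1,4,5)
proof (induction S rule: finite_induct)
  case empty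
  show ?case by (simp add: KL_def KR_def fun_eq_iff Omega_hw)
next
  case (insert p S)
  let ?J = "{..<N} - {i}"
  let ?F = "Fsum N z (w p)"
  let ?U = "UU N z w S"
  let ?P = "\<lambda>q. UU N z w (S - {q})"
  let ?C = "\<lambda>r a. 1 / (w r - z a)"
  have IH: "KL N k z w i S = KR N k z w i S" using insert by auto
  have wz: "\<forall>r\<in>insert p S. \<forall>a<N. w r \<noteq> z a" using insert by auto
  have wd: "\<forall>r\<in>insert p S. \<forall>q\<in>insert p S. r \<noteq> q \<longrightarrow> w r \<noteq> w q" using insert by auto
  have zd: "z j \<noteq> z i" if "j \<in> ?J" for j using assms(3) that by auto
  have U': "UU N z w (insert p S) = ?F ?U" using insert by (simp add: UU_insert)
  have P': "UU N z w (insert p S - {q}) = ?F (?P q)" if "q \<in> S" for q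
  proof -
    have "insert p S - {q} = insert p (S - {q})" using insert that by auto
    then show ?thesis using insert by (simp add: UU_insert)
  qed
  have P'p: "insert p S - {p} = S" using insert by auto
  show ?case
  proof (rule ext)
    fix n
    define E where "E j = Hop k i (Yop j ?U) n - Yop i (Hop k j ?U) n" for j
    have s1: "KL N k z w i (insert p S) n = ?F (KL N k z w i S) n + (\<Sum>j\<in>?J. ?C p i * ?C p j * E j)"
    proof -
      have "KL N k z w i (insert p S) n = (\<Sum>j\<in>?J. ?F (\<lambda>n. (Omega k i j ?U n - k i * k j / 2 * ?U n) / (z i - z j)) n + ?C p i * ?C p j * E j)"
        unfolding KL_def U'
      proof (rule sum.cong[OF refl])
        fix j assume j: "j \<in> ?J"
        have "Omega k i j (?F ?U) n = ?F (Omega k i j ?U) n + (?C p i - ?C p j) * E j"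
          using j assms(2) by (simp add: Omega_Fsum E_def)
        moreover have "(?C p i - ?C p j) / (z i - z j) = ?C p i * ?C p j"
          using sc1[of "w p" "z i" "z j"] wz j assms(2) zd[OF j] by auto
        moreover have "?F (\<lambda>n. (Omega k i j ?U n - k i * k j / 2 * ?U n) / (z i - z j)) n
           = (?F (Omega k i j ?U) n - k i * k j / 2 * ?F ?U n) / (z i - z j)" by simp
        ultimately show "(Omega k i j (?F ?U) n - k i * k j / 2 * ?F ?U n) / (z i - z j) =
            ?F (\<lambda>n. (Omega k i j ?U n - k i * k j / 2 * ?U n) / (z i - z j)) n + ?C p i * ?C p j * E j"
          using lin_div[of "?F (Omega k i j ?U) n" "?C p i - ?C p j" "E j" "k i * k j / 2 * ?F ?U n" "z i - z j"]
          by simp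
      qed
      also have "\<dots> = ?F (KL N k z w i S) n + (\<Sum>j\<in>?J. ?C p i * ?C p j * E j)"
        by (simp add: KL_def sum.distrib)
      finally show ?thesis .
    qed
    have s2: "KL N k z w i (insert p S) n = ?F (KR N k z w i S) n + (\<Sum>j\<in>?J. ?C p i * ?C p j * E j)"
      using s1 IH by simp
    have s3: "E j = k i * Yop j ?U n - k j * Yop i ?U n - 2 * (\<Sum>q\<in>S. Yop j (Yop i (?P q)) n * (?C q i - ?C q j))"
      if j: "j \<in> ?J" for j
    proof -
      have ij: "i \<noteq> j" "j < N" using j by auto
      have h1: "Hop k i (Yop j ?U) n = k i * Yop j ?U n - 2 * (\<Sum>q\<in>S. Yop j (Yop i (?P q)) n / (w q - z i))"
        using ij insert(1) assms(2) by (simp add: Hop_Yop UU_L1)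
      have h2: "Yop i (Hop k j ?U) n = k j * Yop i ?U n - 2 * (\<Sum>q\<in>S. Yop j (Yop i (?P q)) n / (w q - z j))"
        using ij insert(1) by (simp add: UU_L1 Yop_Yop)
      have h3: "(\<Sum>q\<in>S. Yop j (Yop i (?P q)) n * (?C q i - ?C q j)) =
          (\<Sum>q\<in>S. Yop j (Yop i (?P q)) n / (w q - z i)) - (\<Sum>q\<in>S. Yop j (Yop i (?P q)) n / (w q - z j))"
        by (simp add: sum_subtractf[symmetric] right_diff_distrib)
      show ?thesis unfolding E_def h1 h2 h3 by (simp add: algebra_simps)
    qed
    have FKR: "?F (KR N k z w i S) n = (\<Sum>r\<in>S. \<Sum>j\<in>?J. (k i * Yop j (?F (?P r)) n - k j * Yop i (?F (?P r)) n) / ((w r - z i) * (w r - z j)))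
       + (\<Sum>r\<in>S. (\<Sum>q\<in>S - {r}. 2 / (w r - w q)) * Yop i (?F (?P r)) n / (w r - z i))"
      by (simp add: KR_def Fsum_Yop)
    have inner: "(\<Sum>q\<in>insert p S - {r}. 2 / (w r - w q)) = 2 / (w r - w p) + (\<Sum>q\<in>S - {r}. 2 / (w r - w q))"
      if "r \<in> S" for r
    proof -
      have "insert p S - {r} = insert p (S - {r})" using insert that by auto
      then show ?thesis using insert by simp
    qed
    have KRi: "KR N k z w i (insert p S) n =
        ((\<Sum>j\<in>?J. (k i * Yop j ?U n - k j * Yop i ?U n) / ((w p - z i) * (w p - z j)))
         + (\<Sum>r\<in>S. \<Sum>j\<in>?J. (k i * Yop j (?F (?P r)) n - k j * Yop i (?F (?P r)) n) / ((w r - z i) * (w r - z j))))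
      + ((\<Sum>q\<in>S. 2 / (w p - w q)) * Yop i ?U n / (w p - z i)
         + (\<Sum>r\<in>S. (2 / (w r - w p) + (\<Sum>q\<in>S - {r}. 2 / (w r - w q))) * Yop i (?F (?P r)) n / (w r - z i)))"
      unfolding KR_def using insert(1,2)
      by (simp add: P'p P' inner cong: sum.cong)
    have s4: "KR N k z w i (insert p S) n = ?F (KR N k z w i S) n
        + (\<Sum>j\<in>?J. ?C p i * ?C p j * (k i * Yop j ?U n - k j * Yop i ?U n))
        + (\<Sum>q\<in>S. 2 / (w p - w q) * ?C p i * Yop i ?U n + 2 / (w q - w p) * ?C q i * Yop i (?F (?P q)) n)"
    proof -
      have e1: "(\<Sum>j\<in>?J. (k i * Yop j ?U n - k j * Yop i ?U n) / ((w p - z i) * (w p - z j)))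
          = (\<Sum>j\<in>?J. ?C p i * ?C p j * (k i * Yop j ?U n - k j * Yop i ?U n))"
        by (simp add: field_simps)
      have e2: "(\<Sum>q\<in>S. 2 / (w p - w q)) * Yop i ?U n / (w p - z i) = (\<Sum>q\<in>S. 2 / (w p - w q) * ?C p i * Yop i ?U n)"
        by (simp add: sum_distrib_right sum_divide_distrib)
      have e3: "(\<Sum>r\<in>S. (2 / (w r - w p) + (\<Sum>q\<in>S - {r}. 2 / (w r - w q))) * Yop i (?F (?P r)) n / (w r - z i))
         = (\<Sum>r\<in>S. 2 / (w r - w p) * ?C r i * Yop i (?F (?P r)) n) + (\<Sum>r\<in>S. (\<Sum>q\<in>S - {r}. 2 / (w r - w q)) * Yop i (?F (?P r)) n / (w r - z i))"
        by (simp add: sum.distrib[symmetric] distrib_right add_divide_distrib)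
      show ?thesis unfolding KRi FKR e1 e2 e3 sum.distrib
        by (simp only: add.assoc add.commute add.left_commute)
    qed
    let ?Y = "\<lambda>a q. Yop a (Yop i (?P q)) n"
    have pS: "p \<notin> S" using insert by auto
    have R: "(\<Sum>q\<in>S. 2 / (w p - w q) * ?C p i * Yop i ?U n + 2 / (w q - w p) * ?C q i * Yop i (?F (?P q)) n)
       = (\<Sum>q\<in>S. \<Sum>a\<in>?J. ?Y a q * (2 * (z a - z i) / ((w p - z i) * (w p - z a) * (w q - z i) * (w q - z a))))"
    proof (rule sum.cong[OF refl])
      fix q assume q: "q \<in> S"
      have "Yop i ?U n = Yop i (Fsum N z (w q) (?P q)) n" using UU_remove[OF insert(1) q] by simp
      also have "\<dots> = (\<Sum>a<N. ?Y a q / (w q - z a))" by (simp add: Fsum_Yop[symmetric] Fsum_def Yop_Yop)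
      finally have y1: "Yop i ?U n = (\<Sum>a<N. ?Y a q / (w q - z a))" .
      have y2: "Yop i (?F (?P q)) n = (\<Sum>a<N. ?Y a q / (w p - z a))" by (simp add: Fsum_Yop[symmetric] Fsum_def Yop_Yop)
      have "2 / (w p - w q) * ?C p i * Yop i ?U n + 2 / (w q - w p) * ?C q i * Yop i (?F (?P q)) n
          = (\<Sum>a<N. ?Y a q * (2 / (w p - w q) * ?C p i * ?C q a + 2 / (w q - w p) * ?C q i * ?C p a))"
        unfolding y1 y2 sum_distrib_left sum.distrib[symmetric] by (rule sum.cong[OF refl]) (rule lin2)
      also have "\<dots> = ?Y i q * 0 + (\<Sum>a\<in>?J. ?Y a q * (2 / (w p - w q) * ?C p i * ?C q a + 2 / (w q - w p) * ?C q i * ?C p a))"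
      proof -
        have "(\<Sum>a<N. ?Y a q * (2 / (w p - w q) * ?C p i * ?C q a + 2 / (w q - w p) * ?C q i * ?C p a))
          = ?Y i q * (2 / (w p - w q) * ?C p i * ?C q i + 2 / (w q - w p) * ?C q i * ?C p i) +
            (\<Sum>a\<in>?J. ?Y a q * (2 / (w p - w q) * ?C p i * ?C q a + 2 / (w q - w p) * ?C q i * ?C p a))"
          using assms(2) by (subst sum.remove[of _ i]) auto
        moreover have "2 / (w p - w q) * ?C p i * ?C q i + 2 / (w q - w p) * ?C q i * ?C p i = 0"
          by (rule sc0)
        ultimately show ?thesis by simp
      qed
      also have "\<dots> = (\<Sum>a\<in>?J. ?Y a q * (2 * (z a - z i) / ((w p - z i) * (w p - z a) * (w q - z i) * (w q - z a))))"
      proof -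
        have "?Y a q * (2 / (w p - w q) * ?C p i * ?C q a + 2 / (w q - w p) * ?C q i * ?C p a)
            = ?Y a q * (2 * (z a - z i) / ((w p - z i) * (w p - z a) * (w q - z i) * (w q - z a)))"
          if a: "a \<in> ?J" for a
        proof -
          have "w p \<noteq> w q" using wd q pS by (metis insertCI)
          moreover have "w p \<noteq> z i" "w p \<noteq> z a" "w q \<noteq> z i" "w q \<noteq> z a"
            using wz q a assms(2) by auto
          ultimately show ?thesis using sc3[of "w p" "w q" "z i" "z a"] by (simp add: mult.assoc)
        qed
        then show ?thesis by simp
      qed
      finally show "2 / (w p - w q) * ?C p i * Yop i ?U n + 2 / (w q - w p) * ?C q i * Yop i (?F (?P q)) n
       = (\<Sum>a\<in>?J. ?Y a q * (2 * (z a - z i) / ((w p - z i) * (w p - z a) * (w q - z i) * (w q - z a))))" .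
    qed
    have L: "(\<Sum>j\<in>?J. - (?C p i * ?C p j * (2 * (\<Sum>q\<in>S. Yop j (Yop i (?P q)) n * (?C q i - ?C q j)))))
       = (\<Sum>q\<in>S. \<Sum>a\<in>?J. ?Y a q * (2 * (z a - z i) / ((w p - z i) * (w p - z a) * (w q - z i) * (w q - z a))))"
    proof -
      have "(\<Sum>j\<in>?J. - (?C p i * ?C p j * (2 * (\<Sum>q\<in>S. Yop j (Yop i (?P q)) n * (?C q i - ?C q j)))))
         = (\<Sum>j\<in>?J. \<Sum>q\<in>S. ?Y j q * (2 * (z j - z i) / ((w p - z i) * (w p - z j) * (w q - z i) * (w q - z j))))"
      proof (rule sum.cong[OF refl])
        fix j assume j: "j \<in> ?J"
        have "- (?C p i * ?C p j * (2 * (\<Sum>q\<in>S. Yop j (Yop i (?P q)) n * (?C q i - ?C q j))))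
            = (\<Sum>q\<in>S. - (?C p i * ?C p j * (2 * (Yop j (Yop i (?P q)) n * (?C q i - ?C q j)))))"
          by (simp add: sum_distrib_left sum_negf)
        also have "\<dots> = (\<Sum>q\<in>S. ?Y j q * (2 * (z j - z i) / ((w p - z i) * (w p - z j) * (w q - z i) * (w q - z j))))"
        proof (rule sum.cong[OF refl])
          fix q assume q: "q \<in> S"
          have "w q \<noteq> z i" "w q \<noteq> z j" using wz q j assms(2) by auto
          then have "?C q i - ?C q j = (z i - z j) / ((w q - z i) * (w q - z j))" by (rule sc2)
          then show "- (?C p i * ?C p j * (2 * (Yop j (Yop i (?P q)) n * (?C q i - ?C q j))))
             = ?Y j q * (2 * (z j - z i) / ((w p - z i) * (w p - z j) * (w q - z i) * (w q - z j)))"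
            using sc5[of "w p - z i" "w p - z j" "?Y j q" "z i" "z j" "w q - z i" "w q - z j"]
            by (simp add: Yop_Yop[of j i])
        qed
        finally show "- (?C p i * ?C p j * (2 * (\<Sum>q\<in>S. Yop j (Yop i (?P q)) n * (?C q i - ?C q j))))
           = (\<Sum>q\<in>S. ?Y j q * (2 * (z j - z i) / ((w p - z i) * (w p - z j) * (w q - z i) * (w q - z j))))" .
      qed
      then show ?thesis by (simp add: sum.swap[of _ ?J])
    qed
    have "KL N k z w i (insert p S) n = ?F (KR N k z w i S) n
        + (\<Sum>j\<in>?J. ?C p i * ?C p j * (k i * Yop j ?U n - k j * Yop i ?U n))
        + (\<Sum>j\<in>?J. - (?C p i * ?C p j * (2 * (\<Sum>q\<in>S. Yop j (Yop i (?P q)) n * (?C q i - ?C q j)))))"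
    proof -
      have "(\<Sum>j\<in>?J. ?C p i * ?C p j * E j) = (\<Sum>j\<in>?J. ?C p i * ?C p j * (k i * Yop j ?U n - k j * Yop i ?U n)
          + - (?C p i * ?C p j * (2 * (\<Sum>q\<in>S. Yop j (Yop i (?P q)) n * (?C q i - ?C q j)))))"
      proof (rule sum.cong[OF refl])
        fix j assume j: "j \<in> ?J"
        show "?C p i * ?C p j * E j = ?C p i * ?C p j * (k i * Yop j ?U n - k j * Yop i ?U n)
          + - (?C p i * ?C p j * (2 * (\<Sum>q\<in>S. Yop j (Yop i (?P q)) n * (?C q i - ?C q j))))"
          unfolding s3[OF j] by (rule cd)
      qed
      then show ?thesis unfolding s2 sum.distrib by (simp only: add.assoc)
    qed
    then show "KL N k z w i (insert p S) n = KR N k z w i (insert p S) n"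
      unfolding s4 L R .
  qed
qed




lemma g1: "ki / A * (Y / B) = (ki * Y - ka * Y') / (A * B) + ka / B * (Y' / A)" for ki A Y B ka Y' :: complex
  by (simp add: diff_divide_distrib)

lemma pp:
  assumes "finite S" "p \<in> S" "i < N"
  shows "k i / (w p - z i) * UU N z w S n =
     (\<Sum>j\<in>{..<N} - {i}. (k i * Yop j (UU N z w (S - {p})) n - k j * Yop i (UU N z w (S - {p})) n) / ((w p - z i) * (w p - z j)))
     + (\<Sum>a<N. k a / (w p - z a)) * (Yop i (UU N z w (S - {p})) n / (w p - z i))"
proof -
  let ?J = "{..<N} - {i}"
  let ?Y = "\<lambda>a. Yop a (UU N z w (S - {p})) n"
  have U: "UU N z w S n = ?Y i / (w p - z i) + (\<Sum>a\<in>?J. ?Y a / (w p - z a))"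
    using UU_remove[OF assms(1,2)] assms(3) by (simp add: Fsum_def sum.remove[of "{..<N}" i])
  have K: "(\<Sum>a<N. k a / (w p - z a)) = k i / (w p - z i) + (\<Sum>a\<in>?J. k a / (w p - z a))"
    using assms(3) by (simp add: sum.remove[of "{..<N}" i])
  have "(\<Sum>a\<in>?J. k i / (w p - z i) * (?Y a / (w p - z a))) =
     (\<Sum>a\<in>?J. (k i * ?Y a - k a * ?Y i) / ((w p - z i) * (w p - z a)) + k a / (w p - z a) * (?Y i / (w p - z i)))"
    by (rule sum.cong[OF refl]) (rule g1)
  then show ?thesis unfolding U K distrib_left distrib_right sum_distrib_left sum_distrib_right sum.distrib
    by (simp only: add.assoc add.commute add.left_commute)
qed

lemma KEY:
  assumes "finite S" "i < N" "\<forall>j<N. j \<noteq> i \<longrightarrow> z j \<noteq> z i"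
    "\<forall>p\<in>S. \<forall>a<N. w p \<noteq> z a" "\<forall>p\<in>S. \<forall>q\<in>S. p \<noteq> q \<longrightarrow> w p \<noteq> w q"
  shows "(\<Sum>p\<in>S. k i / (w p - z i)) * UU N z w S n =
     Lam / 2 * (Hop k i (UU N z w S) n - k i * UU N z w S n)
     + (\<Sum>j\<in>{..<N} - {i}. (Omega k i j (UU N z w S) n - k i * k j / 2 * UU N z w S n) / (z i - z j))
     + (\<Sum>p\<in>S. (Lam + (\<Sum>a<N. k a / (w p - z a)) - (\<Sum>q\<in>S - {p}. 2 / (w p - w q)))
          * (Yop i (UU N z w (S - {p})) n / (w p - z i)))"
proof -
  let ?J = "{..<N} - {i}"
  let ?X = "\<lambda>p. Yop i (UU N z w (S - {p})) n / (w p - z i)"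
  let ?B = "\<lambda>p. (\<Sum>j\<in>?J. (k i * Yop j (UU N z w (S - {p})) n - k j * Yop i (UU N z w (S - {p})) n) / ((w p - z i) * (w p - z j)))"
  let ?A = "\<lambda>p. (\<Sum>a<N. k a / (w p - z a))"
  let ?Q = "\<lambda>p. (\<Sum>q\<in>S - {p}. 2 / (w p - w q))"
  have h1: "Hop k i (UU N z w S) n - k i * UU N z w S n = (\<Sum>p\<in>S. -2 * ?X p)"
    using UU_L1[OF assms(1,2), of k z w] by (simp add: sum_distrib_left sum_negf)
  have h2: "(\<Sum>j\<in>?J. (Omega k i j (UU N z w S) n - k i * k j / 2 * UU N z w S n) / (z i - z j))
      = (\<Sum>p\<in>S. ?B p) + (\<Sum>p\<in>S. ?Q p * ?X p)"
    using fun_cong[OF KEYO[OF assms, of k], of n] by (simp add: KL_def KR_def)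
  have h3: "(\<Sum>p\<in>S. k i / (w p - z i)) * UU N z w S n = (\<Sum>p\<in>S. ?B p + ?A p * ?X p)"
  proof -
    have "(\<Sum>p\<in>S. k i / (w p - z i)) * UU N z w S n = (\<Sum>p\<in>S. k i / (w p - z i) * UU N z w S n)"
      by (simp add: sum_distrib_right)
    also have "\<dots> = (\<Sum>p\<in>S. ?B p + ?A p * ?X p)"
      by (rule sum.cong[OF refl]) (rule pp[OF assms(1) _ assms(2)])
    finally show ?thesis .
  qed
  show ?thesis unfolding h1 h2 h3 sum_distrib_left sum.distrib[symmetric]
    by (rule sum.cong[OF refl]) (simp add: algebra_simps add_divide_distrib)
qed




lemma Yop_deriv:
  assumes "\<And>n. ((\<lambda>t. c t n) has_field_derivative c' n) F"
  shows "((\<lambda>t. Yop a (c t) n) has_field_derivative Yop a c' n) F"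
  using assms by (simp add: Yop_def)

lemma g2a: "x \<noteq> 0 \<Longrightarrow> (A * x - B * (-1)) / (x * x) = A / x + B / x^2" for x A B :: complex
  by (simp add: field_simps power2_eq_square)
lemma g2b: "x \<noteq> 0 \<Longrightarrow> (A * x - B * 0) / (x * x) = A / x" for x A B :: complex
  by (simp add: field_simps)

lemma UU_deriv_z:
  assumes "finite S" "\<forall>p\<in>S. \<forall>a<N. w p \<noteq> z a" "i < N"
  shows "((\<lambda>t. UU N (z(i:=t)) w S n) has_field_derivative
     (\<Sum>p\<in>S. Yop i (UU N z w (S - {p})) n / (w p - z i)^2)) (at (z i))"
  using assms(1,2)
proof (induction S arbitrary: n rule: finite_induct)
  case empty
  then show ?case by simp
next
  case (insert p S)
  let ?Dv = "\<lambda>n. \<Sum>q\<in>S. Yop i (UU N z w (S - {q})) n / (w q - z i)^2"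
  let ?U = "UU N z w S"
  have IH: "((\<lambda>t. UU N (z(i:=t)) w S n) has_field_derivative ?Dv n) (at (z i))" for n
    using insert.IH[of n] insert.prems by blast
  have eq: "UU N (z(i:=t)) w (insert p S) n = (\<Sum>a<N. Yop a (UU N (z(i:=t)) w S) n / (w p - (z(i:=t)) a))" for t
    using insert(1,2) by (simp add: UU_insert Fsum_def)
  have gd: "((\<lambda>t. w p - (z(i:=t)) a) has_field_derivative (if a = i then -1 else 0)) (at (z i))" for a
    by (cases "a = i") (auto intro!: derivative_eq_intros)
  have nz: "w p - z a \<noteq> 0" if "a < N" for a using insert.prems that by auto
  have "((\<lambda>t. \<Sum>a<N. Yop a (UU N (z(i:=t)) w S) n / (w p - (z(i:=t)) a)) has_field_derivative
     (\<Sum>a<N. (Yop a ?Dv n * (w p - z a) - Yop a ?U n * (if a = i then -1 else 0)) / ((w p - z a) * (w p - z a)))) (at (z i))"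
  proof (rule DERIV_sum)
    fix a assume "a \<in> {..<N}"
    then have "w p - (z(i := z i)) a \<noteq> 0" using nz by simp
    from DERIV_divide[OF Yop_deriv[OF IH] gd[of a] this]
    show "((\<lambda>t. Yop a (UU N (z(i:=t)) w S) n / (w p - (z(i:=t)) a)) has_field_derivative
       (Yop a ?Dv n * (w p - z a) - Yop a ?U n * (if a = i then -1 else 0)) / ((w p - z a) * (w p - z a))) (at (z i))"
      by simp
  qed
  moreover have "(\<Sum>a<N. (Yop a ?Dv n * (w p - z a) - Yop a ?U n * (if a = i then -1 else 0)) / ((w p - z a) * (w p - z a)))
     = (\<Sum>a<N. Yop a ?Dv n / (w p - z a) + (if a = i then Yop i ?U n / (w p - z i)^2 else 0))"
  proof (rule sum.cong[OF refl])
    fix a assume a: "a \<in> {..<N}"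
    then have "w p - z a \<noteq> 0" using nz by auto
    then show "(Yop a ?Dv n * (w p - z a) - Yop a ?U n * (if a = i then -1 else 0)) / ((w p - z a) * (w p - z a))
      = Yop a ?Dv n / (w p - z a) + (if a = i then Yop i ?U n / (w p - z i)^2 else 0)"
      using g2a[of "w p - z a" "Yop a ?Dv n" "Yop a ?U n"] g2b[of "w p - z a" "Yop a ?Dv n" "Yop a ?U n"]
      by (cases "a = i") auto
  qed
  moreover have "(\<Sum>a<N. Yop a ?Dv n / (w p - z a) + (if a = i then Yop i ?U n / (w p - z i)^2 else 0))
     = (\<Sum>q\<in>insert p S. Yop i (UU N z w (insert p S - {q})) n / (w q - z i)^2)"
  proof -
    have P': "UU N z w (insert p S - {q}) = Fsum N z (w p) (UU N z w (S - {q}))" if "q \<in> S" for q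
    proof -
      have "insert p S - {q} = insert p (S - {q})" using insert that by auto
      then show ?thesis using insert by (simp add: UU_insert)
    qed
    have P'p: "insert p S - {p} = S" using insert by auto
    have "(\<Sum>a<N. Yop a ?Dv n / (w p - z a)) = Fsum N z (w p) ?Dv n" by (simp add: Fsum_def)
    also have "\<dots> = (\<Sum>q\<in>S. Yop i (Fsum N z (w p) (UU N z w (S - {q}))) n / (w q - z i)^2)"
      by (simp add: Fsum_Yop)
    finally have "(\<Sum>a<N. Yop a ?Dv n / (w p - z a)) = (\<Sum>q\<in>S. Yop i (UU N z w (insert p S - {q})) n / (w q - z i)^2)"
      by (simp add: P')
    then show ?thesis using insert(1,2) assms(3) by (simp add: sum.distrib P'p)
  qed
  ultimately show ?case unfolding eq by simp
qed




lemma ratfunz_sum: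
  assumes "finite A" "\<And>x. x \<in> A \<Longrightarrow> f x \<in> ratfunz N m"
  shows "(\<lambda>z w. \<Sum>x\<in>A. f x z w) \<in> ratfunz N m"
  using assms
proof (induction A rule: finite_induct)
  case empty
  then show ?case using ratfunz.const[of 0] by simp
next
  case (insert x F)
  have "(\<lambda>z w. f x z w + (\<Sum>y\<in>F. f y z w)) \<in> ratfunz N m"
    by (rule ratfunz.add) (use insert in auto)
  then show ?case using insert by simp
qed

lemma ratfunz_if: "f \<in> ratfunz N m \<Longrightarrow> (\<lambda>z w. if P then 0 else f z w) \<in> ratfunz N m"
  using ratfunz.const[of 0] by (cases P) auto

lemma UU_ratfunz:
  assumes "finite S" "S \<subseteq> {..<m}"
  shows "(\<lambda>z w. UU N z w S n) \<in> ratfunz N m"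
  using assms
proof (induction S arbitrary: n rule: finite_induct)
  case empty
  then show ?case using ratfunz.const[of "hw_vec n"] by simp
next
  case (insert p S)
  have pm: "p < m" using insert by auto
  have eq: "(\<lambda>z w. UU N z w (insert p S) n) =
     (\<lambda>z w. \<Sum>a<N. (if n a = 0 then 0 else UU N z w S (n(a := n a - 1))) * (1 / (w p - z a)))"
    using insert(1,2) by (simp add: UU_insert Fsum_def Yop_def fun_eq_iff)
  show ?case unfolding eq
  proof (rule ratfunz_sum)
    fix a assume a: "a \<in> {..<N}"
    show "(\<lambda>z w. (if n a = 0 then 0 else UU N z w S (n(a := n a - 1))) * (1 / (w p - z a))) \<in> ratfunz N m"
      by (rule ratfunz.mult[OF ratfunz_if ratfunz.pole]) (use insert pm a in auto)
  qed simp
qed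

lemma ratfunz_ratfun: "f \<in> ratfunz N m \<Longrightarrow> (\<lambda>w. f z w) \<in> ratfun N m z"
  by (induction rule: ratfunz.induct) (auto intro: ratfun.intros)

lemma Gp_ratfun:
  assumes "p < m" "i < N"
  shows "(\<lambda>w. Yop i (UU N z w ({..<m} - {p})) n / (w p - z i)) \<in> ratfun N m z"
proof -
  have "(\<lambda>z w. (if n i = 0 then 0 else UU N z w ({..<m} - {p}) (n(i := n i - 1))) * (1 / (w p - z i))) \<in> ratfunz N m"
    by (rule ratfunz.mult[OF ratfunz_if[OF UU_ratfunz] ratfunz.pole]) (use assms in auto)
  from ratfunz_ratfun[OF this, of z] show ?thesis by (simp add: Yop_def)
qed

locale adm =
  fixes N m Zs G Phi intg
  assumes adm: "admissible_cycle N m Zs G Phi intg"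
begin

lemma intg_add: "intg (\<lambda>w. f w + g w) = intg f + intg g"
  using adm unfolding admissible_cycle_def by blast
lemma intg_scale: "intg (\<lambda>w. c * f w) = c * intg f"
  using adm unfolding admissible_cycle_def by blast
lemma intg_cong: "(\<And>w. w \<in> G \<Longrightarrow> f w = g w) \<Longrightarrow> intg f = intg g"
  using adm unfolding admissible_cycle_def by blast
lemma intg_zero: "intg (\<lambda>w. 0) = 0"
  using intg_scale[of 0 "\<lambda>w. 0"] by simp
lemma intg_sum: "intg (\<lambda>w. \<Sum>x\<in>A. f x w) = (\<Sum>x\<in>A. intg (f x))"
proof (induction A rule: infinite_finite_induct)
  case (infinite A)
  then show ?case by (simp add: intg_zero)
next
  case empty
  then show ?case by (simp add: intg_zero)
next
  case (insert x F)
  then show ?case by (simp add: intg_add)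
qed
lemma intg_div: "intg (\<lambda>w. f w / d) = intg f / d"
  using intg_scale[of "1/d" f] by simp
lemma intg_Yop: "Yop a (\<lambda>n. intg (\<lambda>w. f w n)) n = intg (\<lambda>w. Yop a (f w) n)"
  by (simp add: Yop_def intg_zero)
lemma intg_Hop: "Hop k a (\<lambda>n. intg (\<lambda>w. f w n)) n = intg (\<lambda>w. Hop k a (f w) n)"
  by (simp add: Hop_def intg_scale)
lemma intg_Xop: "Xop k a (\<lambda>n. intg (\<lambda>w. f w n)) n = intg (\<lambda>w. Xop k a (f w) n)"
  by (simp add: Xop_def intg_scale)
lemma intg_Omega: "Omega k i j (\<lambda>n. intg (\<lambda>w. f w n)) n = intg (\<lambda>w. Omega k i j (f w) n)"
proof -
  have h: "Hop k j (\<lambda>n. intg (\<lambda>w. f w n)) = (\<lambda>n. intg (\<lambda>w. Hop k j (f w) n))"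
    by (rule ext) (rule intg_Hop)
  have y: "Yop j (\<lambda>n. intg (\<lambda>w. f w n)) = (\<lambda>n. intg (\<lambda>w. Yop j (f w) n))"
    by (rule ext) (rule intg_Yop)
  have x: "Xop k j (\<lambda>n. intg (\<lambda>w. f w n)) = (\<lambda>n. intg (\<lambda>w. Xop k j (f w) n))"
    by (rule ext) (rule intg_Xop)
  show ?thesis unfolding Omega_def h y x intg_Hop intg_Yop intg_Xop
    by (simp add: intg_add intg_scale intg_div)
qed

end




lemma bs: "b2 \<noteq> 0 \<Longrightarrow> b2 * (c / (b2 * x)) = c / x" for b2 c x :: complex
  by (cases "x = 0") (simp_all add: field_simps)

lemma bsum: "b2 \<noteq> 0 \<Longrightarrow> b2 * (\<Sum>a\<in>A. c a / (b2 * x a)) = (\<Sum>a\<in>A. c a / x a)" for b2 :: complex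
  by (simp add: sum_distrib_left bs)

lemma bs2: "b2 \<noteq> 0 \<Longrightarrow> b2 * (X / (2 * b2 * d)) = X / (2 * d)" for b2 X d :: complex
  by (cases "d = 0") (simp_all add: field_simps)

lemma gm: "- (B) * (x - y) = - (B) * x + B * y" for B x y :: complex
  by (simp add: algebra_simps)

lemma gen: "B * (P * c * X - P * X2) = P * ((B * c) * X) - B * (P * X2)" for B P c X X2 :: complex
  by (simp add: algebra_simps)

theorem theorem2:
  fixes N m :: nat and k :: "nat \<Rightarrow> complex" and b Lam :: complex
    and Zs G :: "(nat \<Rightarrow> complex) set"
    and phi0 :: "(nat \<Rightarrow> complex) \<Rightarrow> complex"
    and Phi :: "(nat \<Rightarrow> complex) \<Rightarrow> (nat \<Rightarrow> complex) \<Rightarrow> complex"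
    and intg :: "((nat \<Rightarrow> complex) \<Rightarrow> complex) \<Rightarrow> complex"
    and z :: "nat \<Rightarrow> complex" and i :: nat
  assumes "N \<ge> 1" and "m \<ge> 1" and "b \<noteq> 0" and "open Zs"
    and "\<forall>z'\<in>Zs. \<forall>a<N. \<forall>c<N. a \<noteq> c \<longrightarrow> z' a \<noteq> z' c"
    and "phi0_branch N k b Lam Zs phi0"
    and "master_branch N m k b Lam Zs G Phi"
    and "admissible_cycle N m Zs G Phi intg"
    and "z \<in> Zs" and "i < N"
  shows "\<forall>n. \<exists>D. ((\<lambda>t. Psi N m phi0 Phi intg (z(i := t)) n) has_field_derivative D) (at (z i)) \<and>
           - (b^2) * D = Lam / 2 * Hop k i (Psi N m phi0 Phi intg z) n
              + (\<Sum>j\<in>{..<N} - {i}. Omega k i j (Psi N m phi0 Phi intg z) n / (z i - z j))"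
proof
  fix n
  interpret adm N m Zs G Phi intg using assms(8) by unfold_locales
  let ?S = "{..<m}"
  let ?J = "{..<N} - {i}"
  have b2: "b^2 \<noteq> 0" using assms(3) by simp
  have zd: "\<forall>j<N. j \<noteq> i \<longrightarrow> z j \<noteq> z i" using bspec[OF assms(5) assms(9)] assms(10) by blast
  note mb = bspec[OF bspec[OF assms(7)[unfolded master_branch_def] assms(9)]]
  have adm4: "\<forall>R\<in>ratfunz N m. \<forall>z\<in>Zs. \<forall>i<N.
        ((\<lambda>t. intg (\<lambda>w. Phi (z(i := t)) w * R (z(i := t)) w)) has_field_derivative
           intg (\<lambda>w. pd i (\<lambda>z'. Phi z' w * R z' w) z)) (at (z i))"
    using assms(8) unfolding admissible_cycle_def by (elim conjE) assumption
  have adm5: "\<forall>z\<in>Zs. \<forall>R\<in>ratfun N m z. \<forall>p<m.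
        intg (\<lambda>w. pd p (\<lambda>w'. Phi z w' * R w') w) = 0"
    using assms(8) unfolding admissible_cycle_def by (elim conjE) assumption
  define Y where "Y p w = Yop i (UU N z w (?S - {p})) n" for p w
  define Dn where "Dn w = (\<Sum>p\<in>?S. Y p w / (w p - z i)^2)" for w
  define dz where "dz w = Phi z w * (- (\<Sum>p<m. k i / (b^2 * (w p - z i)))) * UU N z w ?S n + Phi z w * Dn w" for w
  define Rp where "Rp p w = Yop i (UU N z w (?S - {p})) n / (w p - z i)" for p w
  define dw where "dw p w = Phi z w * (Lam / b^2 + (\<Sum>a<N. k a / (b^2 * (w p - z a)))
                        - (\<Sum>q\<in>{..<m} - {p}. 2 / (b^2 * (w p - w q)))) * (Y p w / (w p - z i))
                  - Phi z w * (Y p w / (w p - z i)^2)" for p w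
  have pdz: "pd i (\<lambda>z'. Phi z' w * Fprod N m z' w n) z = dz w" if w: "w \<in> G" for w
  proof -
    have wz: "\<forall>p\<in>?S. \<forall>a<N. w p \<noteq> z a" using conjunct1[OF mb[OF w]] by blast
    have d1: "((\<lambda>t. Phi (z(i := t)) w) has_field_derivative Phi z w * (- (\<Sum>p<m. k i / (b^2 * (w p - z i))))) (at (z i))"
      using mb[OF w] assms(10) by blast
    have d2: "((\<lambda>t. UU N (z(i:=t)) w ?S n) has_field_derivative Dn w) (at (z i))"
      unfolding Dn_def Y_def by (rule UU_deriv_z[OF _ wz assms(10)]) simp
    have "((\<lambda>t. Phi (z(i := t)) w * UU N (z(i:=t)) w ?S n) has_field_derivative dz w) (at (z i))"
      using DERIV_mult'[OF d1 d2] unfolding dz_def by (simp add: algebra_simps)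
    then show ?thesis unfolding pd_def Fprod_UU by (rule DERIV_imp_deriv)
  qed
  have pdw: "pd p (\<lambda>w'. Phi z w' * Rp p w') w = dw p w" if w: "w \<in> G" and p: "p < m" for w p
  proof -
    have nz: "w p - z i \<noteq> 0" using conjunct1[OF mb[OF w]] p assms(10) by auto
    have Rpt: "Rp p (w(p := t)) = Y p w / (t - z i)" for t
    proof -
      have "UU N z (w(p := t)) (?S - {p}) = UU N z w (?S - {p})"
        by (rule UU_cong) auto
      then show ?thesis unfolding Rp_def Y_def by simp
    qed
    have d1: "((\<lambda>t. Phi z (w(p := t))) has_field_derivative
            Phi z w * (Lam / b^2 + (\<Sum>a<N. k a / (b^2 * (w p - z a)))
                        - (\<Sum>q\<in>{..<m} - {p}. 2 / (b^2 * (w p - w q))))) (at (w p))"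
      using mb[OF w] p by blast
    have d2: "((\<lambda>t. Y p w / (t - z i)) has_field_derivative - (Y p w / (w p - z i)^2)) (at (w p))"
    proof -
      have "((\<lambda>t. Y p w / (t - z i)) has_field_derivative (0 * (w p - z i) - Y p w * 1) / ((w p - z i) * (w p - z i))) (at (w p))"
        using nz by (rule_tac DERIV_divide) (auto intro!: derivative_eq_intros)
      then show ?thesis using nz by (simp add: power2_eq_square)
    qed
    have "((\<lambda>t. Phi z (w(p := t)) * (Y p w / (t - z i))) has_field_derivative dw p w) (at (w p))"
      using DERIV_mult'[OF d1 d2] unfolding dw_def by (simp add: algebra_simps)
    then show ?thesis unfolding pd_def Rpt by (rule DERIV_imp_deriv)
  qed
  have ibp: "intg (dw p) = 0" if p: "p < m" for p
  proof -
    have "intg (\<lambda>w. pd p (\<lambda>w'. Phi z w' * Rp p w') w) = 0"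
    proof -
      have "Rp p \<in> ratfun N m z" unfolding Rp_def[abs_def] by (rule Gp_ratfun[OF p assms(10)])
      then show ?thesis using bspec[OF adm5 assms(9)] p by blast
    qed
    moreover have "intg (\<lambda>w. pd p (\<lambda>w'. Phi z w' * Rp p w') w) = intg (dw p)"
      by (rule intg_cong) (rule pdw[OF _ p])
    ultimately show ?thesis by simp
  qed
  have PW: "- (b^2) * dz w = Phi z w * (Lam / 2 * (Hop k i (UU N z w ?S) n - k i * UU N z w ?S n)
      + (\<Sum>j\<in>?J. (Omega k i j (UU N z w ?S) n - k i * k j / 2 * UU N z w ?S n) / (z i - z j)))
      + b^2 * (\<Sum>p<m. dw p w)" if w: "w \<in> G" for w
  proof -
    have wz: "\<forall>p\<in>?S. \<forall>a<N. w p \<noteq> z a" using conjunct1[OF mb[OF w]] by blast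
    have wd: "\<forall>p\<in>?S. \<forall>q\<in>?S. p \<noteq> q \<longrightarrow> w p \<noteq> w q" using conjunct1[OF conjunct2[OF mb[OF w]]] by blast
    note K = KEY[OF _ assms(10) zd wz wd, of k n Lam, simplified]
    have c1: "- (b^2) * (- (\<Sum>p<m. k i / (b^2 * (w p - z i)))) = (\<Sum>p<m. k i / (w p - z i))"
      using bsum[OF b2, where c="\<lambda>_. k i" and A="{..<m}" and x="\<lambda>p. w p - z i"] by simp
    have c2: "b^2 * (Lam / b^2 + (\<Sum>a<N. k a / (b^2 * (w p - z a))) - (\<Sum>q\<in>{..<m} - {p}. 2 / (b^2 * (w p - w q))))
       = Lam + (\<Sum>a<N. k a / (w p - z a)) - (\<Sum>q\<in>{..<m} - {p}. 2 / (w p - w q))" for p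
      using bsum[OF b2, where c=k and A="{..<N}" and x="\<lambda>a. w p - z a"] bsum[OF b2, where c="\<lambda>_. 2" and A="{..<m} - {p}" and x="\<lambda>q. w p - w q"] b2
      by (simp add: right_diff_distrib distrib_left)
    have e1: "- (b^2) * dz w = Phi z w * ((\<Sum>p<m. k i / (w p - z i)) * UU N z w ?S n) - b^2 * (Phi z w * Dn w)"
      unfolding dz_def c1[symmetric] by (simp add: algebra_simps)
    have e2: "b^2 * (\<Sum>p<m. dw p w) = Phi z w * (\<Sum>p<m. (Lam + (\<Sum>a<N. k a / (w p - z a)) - (\<Sum>q\<in>{..<m} - {p}. 2 / (w p - w q)))
          * (Y p w / (w p - z i))) - b^2 * (Phi z w * Dn w)"
    proof -
      have "b^2 * (\<Sum>p<m. dw p w) = (\<Sum>p<m. b^2 * dw p w)" by (simp add: sum_distrib_left)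
      also have "\<dots> = (\<Sum>p<m. Phi z w * ((Lam + (\<Sum>a<N. k a / (w p - z a)) - (\<Sum>q\<in>{..<m} - {p}. 2 / (w p - w q)))
          * (Y p w / (w p - z i))) - b^2 * (Phi z w * (Y p w / (w p - z i)^2)))"
      proof (rule sum.cong[OF refl])
        fix p
        show "b^2 * dw p w = Phi z w * ((Lam + (\<Sum>a<N. k a / (w p - z a)) - (\<Sum>q\<in>{..<m} - {p}. 2 / (w p - w q)))
          * (Y p w / (w p - z i))) - b^2 * (Phi z w * (Y p w / (w p - z i)^2))"
          unfolding dw_def gen c2 ..
      qed
      also have "\<dots> = Phi z w * (\<Sum>p<m. (Lam + (\<Sum>a<N. k a / (w p - z a)) - (\<Sum>q\<in>{..<m} - {p}. 2 / (w p - w q)))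
          * (Y p w / (w p - z i))) - b^2 * (Phi z w * Dn w)"
        unfolding Dn_def by (simp add: sum_subtractf sum_distrib_left)
      finally show ?thesis .
    qed
    show ?thesis unfolding e1 e2 K Y_def by (simp add: algebra_simps diff_divide_distrib add_divide_distrib)
  qed
  define e0 where "e0 = - Lam * k i / (2 * b^2) - (\<Sum>j\<in>{..<N} - {i}. k i * k j / (2 * b^2 * (z i - z j)))"
  define c0 where "c0 = Lam * k i / 2 + (\<Sum>j\<in>{..<N} - {i}. k i * k j / (2 * (z i - z j)))"
  define I where "I = intg (\<lambda>w. Phi z w * Fprod N m z w n)"
  define J where "J = intg (\<lambda>w. pd i (\<lambda>z'. Phi z' w * Fprod N m z' w n) z)"
  define Xw where "Xw w = Lam / 2 * (Hop k i (UU N z w ?S) n - k i * UU N z w ?S n)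
      + (\<Sum>j\<in>?J. (Omega k i j (UU N z w ?S) n - k i * k j / 2 * UU N z w ?S n) / (z i - z j))" for w
  have dphi: "((\<lambda>t. phi0 (z(i:=t))) has_field_derivative phi0 z * e0) (at (z i))"
    using assms(6,9,10) unfolding phi0_branch_def e0_def by blast
  have Rz: "(\<lambda>z w. Fprod N m z w n) \<in> ratfunz N m"
    unfolding Fprod_UU by (rule UU_ratfunz) auto
  have dJ: "((\<lambda>t. intg (\<lambda>w. Phi (z(i := t)) w * Fprod N m (z(i := t)) w n)) has_field_derivative J) (at (z i))"
    using bspec[OF bspec[OF adm4 Rz] assms(9)] assms(10) unfolding J_def by blast
  have dPsi: "((\<lambda>t. Psi N m phi0 Phi intg (z(i := t)) n) has_field_derivative phi0 z * e0 * I + J * phi0 z) (at (z i))"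
    using DERIV_mult[OF dphi dJ] unfolding Psi_def I_def by simp
  have f1: "- (b^2) * (phi0 z * e0) = phi0 z * c0"
  proof -
    have t1: "- (b^2) * (- Lam * k i / (2 * b^2)) = Lam * k i / 2" using b2 by (simp add: field_simps)
    have t2: "b^2 * (\<Sum>j\<in>{..<N} - {i}. k i * k j / (2 * b^2 * (z i - z j))) = (\<Sum>j\<in>{..<N} - {i}. k i * k j / (2 * (z i - z j)))"
      unfolding sum_distrib_left by (rule sum.cong[OF refl]) (rule bs2[OF b2])
    have "- (b^2) * e0 = c0"
      unfolding e0_def c0_def gm t1 t2 ..
    then show ?thesis by (metis mult.left_commute)
  qed
  have f2: "- (b^2) * J = intg (\<lambda>w. Phi z w * Xw w)"
  proof -
    have "- (b^2) * J = intg (\<lambda>w. - (b^2) * pd i (\<lambda>z'. Phi z' w * Fprod N m z' w n) z)"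
      unfolding J_def by (rule intg_scale[symmetric])
    also have "\<dots> = intg (\<lambda>w. Phi z w * Xw w + b^2 * (\<Sum>p<m. dw p w))"
      by (rule intg_cong) (unfold pdz Xw_def, rule PW)
    also have "\<dots> = intg (\<lambda>w. Phi z w * Xw w)"
      by (simp add: intg_add intg_scale intg_sum ibp)
    finally show ?thesis .
  qed
  have L: "- (b^2) * (phi0 z * e0 * I + J * phi0 z) = intg (\<lambda>w. (phi0 z * Phi z w) * (c0 * UU N z w ?S n + Xw w))"
  proof -
    have "- (b^2) * (phi0 z * e0 * I + J * phi0 z) = (- (b^2) * (phi0 z * e0)) * I + phi0 z * (- (b^2) * J)"
      by (simp add: algebra_simps)
    also have "\<dots> = phi0 z * (c0 * I + (- (b^2) * J))"
      unfolding f1 by (simp add: algebra_simps)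
    also have "\<dots> = intg (\<lambda>w. (phi0 z * Phi z w) * (c0 * UU N z w ?S n + Xw w))"
      unfolding f2 I_def Fprod_UU
      by (simp add: intg_add[symmetric] intg_scale[symmetric] algebra_simps)
    finally show ?thesis .
  qed
  have PsiE: "Psi N m phi0 Phi intg z = (\<lambda>n. intg (\<lambda>w. (phi0 z * Phi z w) * UU N z w ?S n))"
    by (rule ext) (simp add: Psi_def Fprod_UU intg_scale[symmetric] mult.assoc)
  have R: "Lam / 2 * Hop k i (Psi N m phi0 Phi intg z) n
              + (\<Sum>j\<in>{..<N} - {i}. Omega k i j (Psi N m phi0 Phi intg z) n / (z i - z j))
     = intg (\<lambda>w. (phi0 z * Phi z w) * (Lam / 2 * Hop k i (UU N z w ?S) n
              + (\<Sum>j\<in>{..<N} - {i}. Omega k i j (UU N z w ?S) n / (z i - z j))))"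
  proof -
    have "intg (\<lambda>w. (phi0 z * Phi z w) * (Lam / 2 * Hop k i (UU N z w ?S) n
              + (\<Sum>j\<in>{..<N} - {i}. Omega k i j (UU N z w ?S) n / (z i - z j))))
        = intg (\<lambda>w. Lam / 2 * ((phi0 z * Phi z w) * Hop k i (UU N z w ?S) n)
              + (\<Sum>j\<in>{..<N} - {i}. ((phi0 z * Phi z w) * Omega k i j (UU N z w ?S) n) / (z i - z j)))"
      by (rule intg_cong) (simp add: algebra_simps sum_distrib_left)
    also have "\<dots> = Lam / 2 * intg (\<lambda>w. (phi0 z * Phi z w) * Hop k i (UU N z w ?S) n)
              + (\<Sum>j\<in>{..<N} - {i}. intg (\<lambda>w. (phi0 z * Phi z w) * Omega k i j (UU N z w ?S) n) / (z i - z j))"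
      by (simp add: intg_add intg_scale intg_sum intg_div)
    also have "\<dots> = Lam / 2 * Hop k i (Psi N m phi0 Phi intg z) n
              + (\<Sum>j\<in>{..<N} - {i}. Omega k i j (Psi N m phi0 Phi intg z) n / (z i - z j))"
      unfolding PsiE intg_Hop intg_Omega by simp
    finally show ?thesis by simp
  qed
  have INT: "intg (\<lambda>w. (phi0 z * Phi z w) * (c0 * UU N z w ?S n + Xw w)) =
      intg (\<lambda>w. (phi0 z * Phi z w) * (Lam / 2 * Hop k i (UU N z w ?S) n
              + (\<Sum>j\<in>{..<N} - {i}. Omega k i j (UU N z w ?S) n / (z i - z j))))"
  proof (rule intg_cong)
    fix w
    have "c0 * UU N z w ?S n + Xw w = Lam / 2 * Hop k i (UU N z w ?S) n
              + (\<Sum>j\<in>{..<N} - {i}. Omega k i j (UU N z w ?S) n / (z i - z j))"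
      unfolding c0_def Xw_def
      by (simp add: algebra_simps sum_distrib_left sum_distrib_right diff_divide_distrib sum_subtractf)
    then show "(phi0 z * Phi z w) * (c0 * UU N z w ?S n + Xw w) = (phi0 z * Phi z w) * (Lam / 2 * Hop k i (UU N z w ?S) n
              + (\<Sum>j\<in>{..<N} - {i}. Omega k i j (UU N z w ?S) n / (z i - z j)))" by simp
  qed
  show "\<exists>D. ((\<lambda>t. Psi N m phi0 Phi intg (z(i := t)) n) has_field_derivative D) (at (z i)) \<and>
           - (b^2) * D = Lam / 2 * Hop k i (Psi N m phi0 Phi intg z) n
              + (\<Sum>j\<in>{..<N} - {i}. Omega k i j (Psi N m phi0 Phi intg z) n / (z i - z j))"
    using dPsi L INT R by metis
qed


end
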